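(* Let $n \ge 2$ and $1 \le r < n$ be integers, let $S^0 \in \mathbb{R}^{n\times n}$ be a symmetric matrix, and define $f:\mathbb{R}^{n\times r}\to\mathbb{R}$ by $f(V) = \|VV^\top - S^0\|_F^2$. Suppose $\hat V \in \mathbb{R}^{n\times r}$ is a local minimizer of $f$ such that the matrix $\hat S = \hat V\hat V^\top$ satisfies $\operatorname{rank}(\hat S) < r$. Then $\hat V$ is a global minimizer of $f$ over $\mathbb{R}^{n\times r}$, and $\hat S$ is a global minimizer of the problem $\min_{S} \|S - S^0\|_F^2$ subject to $S \succeq 0$ (and hence also of this problem with the additional constraint $\operatorname{rank}(S)\le r$).
   Context: $\|\cdot\|_F$ denotes the Frobenius norm; $S\succeq 0$ means $S$ is symmetric positive semidefinite. *)

theory Defs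
  imports "HOL-Analysis.Analysis"
begin

definition frob_norm :: "real^'n^'m \<Rightarrow> real" where
  "frob_norm A = sqrt (\<Sum>i\<in>UNIV. \<Sum>j\<in>UNIV. (A $ i $ j)^2)"

definition psd :: "real^'n^'n \<Rightarrow> bool" where
  "psd S \<longleftrightarrow> transpose S = S \<and> (\<forall>x. 0 \<le> x \<bullet> (S *v x))"

definition fobj :: "real^'n^'n \<Rightarrow> real^'r^'n \<Rightarrow> real" where
  "fobj S0 V = (frob_norm (V ** transpose V - S0))^2"

end

theory Submission
  imports Defs
begin

lemma frob_norm_eq: "frob_norm (A::real^'n^'m) = norm A"
  unfolding frob_norm_def norm_vec_def L2_set_def
  by (simp add: real_norm_def sum_nonneg)

lemma frob_sq: "(frob_norm (A::real^'n^'m))^2 = (\<Sum>i\<in>UNIV. \<Sum>j\<in>UNIV. (A$i$j)^2)"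
  unfolding frob_norm_def by (simp add: sum_nonneg)

lemma bil_form: "x \<bullet> ((M::real^'n^'n) *v y) = (\<Sum>a\<in>UNIV. \<Sum>b\<in>UNIV. M$a$b * x$a * y$b)"
  by (simp add: inner_vec_def matrix_vector_mult_def sum_distrib_left mult_ac)

lemma sym_entry: "transpose G = G \<Longrightarrow> G$b$a = (G::real^'n^'n)$a$b"
  by (metis transpose_def vec_lambda_beta)

lemma quad_disc:
  fixes a b c :: real
  assumes h: "\<forall>t. 0 \<le> a + 2*t*b + t^2*c"
  shows "b^2 \<le> a*c"
proof -
  have a0: "0 \<le> a" using h[rule_format, of 0] by simp
  have c0: "0 \<le> c"
  proof (rule ccontr)
    assume "\<not> 0 \<le> c"
    hence c: "c < 0" by simp
    define q where "q = sqrt ((\<bar>a\<bar>+\<bar>b\<bar>+1)/(-c))"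
    have pos: "0 \<le> (\<bar>a\<bar>+\<bar>b\<bar>+1)/(-c)" using c by (intro divide_nonneg_pos) auto
    have s2: "q^2 = (\<bar>a\<bar>+\<bar>b\<bar>+1)/(-c)" unfolding q_def using pos by (rule real_sqrt_pow2)
    have "q^2*c = -(\<bar>a\<bar>+\<bar>b\<bar>+1)" using s2 c by (simp add: field_simps)
    moreover have "0 \<le> a + 2*q*b + q^2*c" using h by blast
    moreover have "0 \<le> a + 2*(-q)*b + (-q)^2*c" using h by blast
    moreover have "2*(-q)*b = -(2*q*b)" "(-q)^2*c = q^2*c" by simp_all
    ultimately show False by (smt (verit) abs_ge_self)
  qed
  show ?thesis
  proof (cases "c = 0")
    case True
    show ?thesis
    proof (rule ccontr)
      assume "\<not> b^2 \<le> a*c"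
      hence b: "b \<noteq> 0" using True by simp
      have "0 \<le> a + 2*(-(a+1)/(2*b))*b + (-(a+1)/(2*b))^2*c" using h by blast
      thus False using True b by (simp add: field_simps)
    qed
  next
    case False
    hence c: "c > 0" using c0 by simp
    have "0 \<le> a + 2*(-b/c)*b + (-b/c)^2*c" using h by blast
    hence "0 \<le> a - b^2/c" using c by (simp add: field_simps power2_eq_square)
    thus ?thesis using c by (simp add: field_simps)
  qed
qed

lemma psd_cs:
  fixes G :: "real^'n^'n"
  assumes "psd G"
  shows "(\<Sum>a\<in>UNIV. \<Sum>b\<in>UNIV. G$a$b * x$a * y$b)^2
     \<le> (\<Sum>a\<in>UNIV. \<Sum>b\<in>UNIV. G$a$b * x$a * x$b) * (\<Sum>a\<in>UNIV. \<Sum>b\<in>UNIV. G$a$b * y$a * y$b)"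
proof -
  have sym: "\<And>a b. G$b$a = G$a$b" using assms sym_entry unfolding psd_def by blast
  have swap: "(\<Sum>a\<in>UNIV. \<Sum>b\<in>UNIV. G$a$b * y$a * x$b) = (\<Sum>a\<in>UNIV. \<Sum>b\<in>UNIV. G$a$b * x$a * y$b)"
    by (subst sum.swap) (simp add: sym mult_ac)
  show ?thesis
  proof (rule quad_disc, rule allI)
    fix t
    let ?z = "x + t *\<^sub>R y"
    have "0 \<le> ?z \<bullet> (G *v ?z)" using assms unfolding psd_def by blast
    also have "\<dots> = (\<Sum>a\<in>UNIV. \<Sum>b\<in>UNIV. G$a$b * x$a * x$b + t*(G$a$b * x$a * y$b) + t*(G$a$b * y$a * x$b) + t^2*(G$a$b * y$a * y$b))"
      unfolding bil_form by (intro sum.cong refl) (simp add: algebra_simps power2_eq_square)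
    also have "\<dots> = (\<Sum>a\<in>UNIV. \<Sum>b\<in>UNIV. G$a$b * x$a * x$b) + t*(\<Sum>a\<in>UNIV. \<Sum>b\<in>UNIV. G$a$b * x$a * y$b) + t*(\<Sum>a\<in>UNIV. \<Sum>b\<in>UNIV. G$a$b * y$a * x$b) + t^2*(\<Sum>a\<in>UNIV. \<Sum>b\<in>UNIV. G$a$b * y$a * y$b)"
      by (simp only: sum.distrib sum_distrib_left)
    also have "\<dots> = (\<Sum>a\<in>UNIV. \<Sum>b\<in>UNIV. G$a$b * x$a * x$b) + 2*t*(\<Sum>a\<in>UNIV. \<Sum>b\<in>UNIV. G$a$b * x$a * y$b) + t^2*(\<Sum>a\<in>UNIV. \<Sum>b\<in>UNIV. G$a$b * y$a * y$b)"
      unfolding swap by simp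
    finally show "0 \<le> (\<Sum>a\<in>UNIV. \<Sum>b\<in>UNIV. G$a$b * x$a * x$b) + 2*t*(\<Sum>a\<in>UNIV. \<Sum>b\<in>UNIV. G$a$b * x$a * y$b) + t^2*(\<Sum>a\<in>UNIV. \<Sum>b\<in>UNIV. G$a$b * y$a * y$b)" .
  qed
qed

lemma ax1: "(\<Sum>b\<in>UNIV. f b * (axis i (1::real)) $ b) = f i"
proof -
  have eq: "\<And>b. f b * (axis i (1::real)) $ b = (if b = i then f b else 0)"
    by (auto simp: axis_def)
  show ?thesis by (simp add: eq)
qed

lemma psd_entry_cs:
  fixes G :: "real^'n^'n"
  assumes "psd G"
  shows "(G$i$j)^2 \<le> G$i$i * G$j$j"
  using psd_cs[OF assms, of "axis i 1" "axis j 1"]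
  by (simp only: ax1)

lemma psd_diag: "psd (G::real^'n^'n) \<Longrightarrow> 0 \<le> G$i$i"
proof -
  assume "psd G"
  hence "0 \<le> axis i 1 \<bullet> (G *v axis i 1)" unfolding psd_def by blast
  thus ?thesis by (simp only: bil_form ax1)
qed

lemma schur_real: "(B::real)^2 \<le> Q * c \<Longrightarrow> 0 < c \<Longrightarrow> 0 \<le> Q - B * B / c"
  by (simp add: field_simps power2_eq_square)

lemma schur_psd:
  fixes G :: "real^'n^'n"
  assumes G: "psd G" and c: "0 < c" and c_def: "c = G$i$i"
  shows "psd (\<chi> a b. G$a$b - G$a$i * G$b$i / c)"
proof -
  define G' where "G' = (\<chi> a b. G$a$b - G$a$i * G$b$i / c)"
  have G'e: "\<And>a b. G'$a$b = G$a$b - G$a$i * G$b$i / c" unfolding G'_def by simp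
  have sym: "\<And>a b. G$b$a = G$a$b" using G sym_entry unfolding psd_def by blast
  have "psd G'"
    unfolding psd_def
  proof (intro conjI allI)
    have "\<And>a b. G'$b$a = G'$a$b"
    proof -
      fix a b show "G'$b$a = G'$a$b" unfolding G'e using sym[of a b] by (simp add: mult.commute)
    qed
    then show "transpose G' = G'"
      by (simp add: vec_eq_iff transpose_def)
  next
    fix x :: "real^'n"
    let ?Q = "(\<Sum>a\<in>UNIV. \<Sum>b\<in>UNIV. G$a$b * x$a * x$b)"
    let ?B = "(\<Sum>a\<in>UNIV. G$a$i * x$a)"
    have cs: "?B^2 \<le> ?Q * c"
    proof -
      have "(\<Sum>a\<in>UNIV. \<Sum>b\<in>UNIV. G$a$b * x$a * axis i 1 $ b)^2 \<le> ?Q *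
            (\<Sum>a\<in>UNIV. \<Sum>b\<in>UNIV. G$a$b * axis i 1 $ a * axis i 1 $ b)"
        by (rule psd_cs[OF G])
      moreover have e1: "(\<Sum>a\<in>UNIV. \<Sum>b\<in>UNIV. G$a$b * x$a * axis i 1 $ b) = ?B"
        by (simp only: ax1)
      moreover have e2: "(\<Sum>a\<in>UNIV. \<Sum>b\<in>UNIV. G$a$b * axis i 1 $ a * axis i 1 $ b) = c"
        unfolding c_def by (simp only: ax1)
      ultimately show ?thesis by (simp only: e1 e2)
    qed
    have "x \<bullet> (G' *v x) = (\<Sum>a\<in>UNIV. \<Sum>b\<in>UNIV. G$a$b * x$a * x$b - G$a$i * G$b$i / c * x$a * x$b)"
      unfolding bil_form G'e by (intro sum.cong refl) (simp add: left_diff_distrib)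
    also have "\<dots> = ?Q - (\<Sum>a\<in>UNIV. \<Sum>b\<in>UNIV. G$a$i * G$b$i / c * x$a * x$b)"
      by (simp only: sum_subtractf)
    also have "(\<Sum>a\<in>UNIV. \<Sum>b\<in>UNIV. G$a$i * G$b$i / c * x$a * x$b) = ?B * ?B / c"
    proof -
      have "?B * ?B = (\<Sum>a\<in>UNIV. \<Sum>b\<in>UNIV. (G$a$i * x$a) * (G$b$i * x$b))" by (rule sum_product)
      hence "?B * ?B / c = (\<Sum>a\<in>UNIV. \<Sum>b\<in>UNIV. (G$a$i * x$a) * (G$b$i * x$b) / c)"
        by (simp only: sum_divide_distrib)
      also have "\<dots> = (\<Sum>a\<in>UNIV. \<Sum>b\<in>UNIV. G$a$i * G$b$i / c * x$a * x$b)"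
        by (intro sum.cong refl) (simp add: field_simps)
      finally show ?thesis by simp
    qed
    also have "?Q - ?B * ?B / c \<ge> 0"
      using cs c by (rule schur_real)
    finally show "0 \<le> x \<bullet> (G' *v x)" .
  qed
  thus ?thesis unfolding G'_def .
qed


lemma psd_inner_nonneg:
  fixes S G :: "real^'n^'n"
  assumes S: "psd S" and G0: "psd G"
  shows "0 \<le> (\<Sum>a\<in>UNIV. \<Sum>b\<in>UNIV. S$a$b * G$a$b)"
proof -
  have main: "\<forall>G::real^'n^'n. psd G \<longrightarrow> card {j. \<exists>i. G$i$j \<noteq> 0} = k \<longrightarrow>
       0 \<le> (\<Sum>a\<in>UNIV. \<Sum>b\<in>UNIV. S$a$b * G$a$b)" for k
  proof (induction k rule: less_induct)
    case (less k)
    show ?case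
    proof (intro allI impI)
      fix G :: "real^'n^'n"
      assume G: "psd G" and k: "card {j. \<exists>i. G$i$j \<noteq> 0} = k"
      have sym: "\<And>a b. G$b$a = G$a$b" using G sym_entry unfolding psd_def by blast
      show "0 \<le> (\<Sum>a\<in>UNIV. \<Sum>b\<in>UNIV. S$a$b * G$a$b)"
      proof (cases "\<exists>i j. G$i$j \<noteq> 0")
        case False
        then have "\<And>a b. G$a$b = 0" by blast
        then show ?thesis by simp
      next
        case True
        then obtain i j where ij: "G$i$j \<noteq> 0" by auto
        have cii: "G$i$i > 0"
        proof (rule ccontr)
          assume "\<not> G$i$i > 0"
          hence "G$i$i = 0" using psd_diag[OF G, of i] by simp
          hence "(G$i$j)^2 \<le> 0" using psd_entry_cs[OF G, of i j] by simp
          thus False using ij by simp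
        qed
        define c where "c = G$i$i"
        have c: "c > 0" using cii c_def by simp
        define G' where "G' = (\<chi> a b. G$a$b - G$a$i * G$b$i / c)"
        have G'e: "\<And>a b. G'$a$b = G$a$b - G$a$i * G$b$i / c" unfolding G'_def by simp
        have psdG': "psd G'" unfolding G'_def by (rule schur_psd[OF G c c_def])
        have sub: "{j. \<exists>a. G'$a$j \<noteq> 0} \<subset> {j. \<exists>a. G$a$j \<noteq> 0}"
        proof
          show "{j. \<exists>a. G'$a$j \<noteq> 0} \<subseteq> {j. \<exists>a. G$a$j \<noteq> 0}"
          proof
            fix l assume "l \<in> {j. \<exists>a. G'$a$j \<noteq> 0}"
            then obtain a where "G'$a$l \<noteq> 0" by auto
            hence "G$a$l \<noteq> 0 \<or> G$l$i \<noteq> 0" unfolding G'e by auto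
            moreover have "G$i$l = G$l$i" using sym[of l i] by simp
            ultimately have "G$a$l \<noteq> 0 \<or> G$i$l \<noteq> 0" by simp
            thus "l \<in> {j. \<exists>a. G$a$j \<noteq> 0}" by blast
          qed
          have "i \<notin> {j. \<exists>a. G'$a$j \<noteq> 0}" using c unfolding G'e c_def by simp
          moreover have "G$i$i \<noteq> 0" using cii by simp
          hence "i \<in> {j. \<exists>a. G$a$j \<noteq> 0}" by blast
          ultimately show "{j. \<exists>a. G'$a$j \<noteq> 0} \<noteq> {j. \<exists>a. G$a$j \<noteq> 0}" by blast
        qed
        have "card {j. \<exists>a. G'$a$j \<noteq> 0} < k"
          using psubset_card_mono[OF _ sub] k by simp
        hence IH: "0 \<le> (\<Sum>a\<in>UNIV. \<Sum>b\<in>UNIV. S$a$b * G'$a$b)"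
          using less psdG' by blast
        define v where "v = (\<chi> a. G$a$i)"
        have ve: "\<And>a. v$a = G$a$i" unfolding v_def by simp
        have "0 \<le> v \<bullet> (S *v v)" using S unfolding psd_def by blast
        hence vq: "0 \<le> (\<Sum>a\<in>UNIV. \<Sum>b\<in>UNIV. S$a$b * v$a * v$b)"
          by (simp only: bil_form)
        have "(\<Sum>a\<in>UNIV. \<Sum>b\<in>UNIV. S$a$b * G$a$b)
            = (\<Sum>a\<in>UNIV. \<Sum>b\<in>UNIV. S$a$b * G'$a$b + S$a$b * v$a * v$b / c)"
          using c by (intro sum.cong refl) (simp add: G'e ve field_simps)
        also have "\<dots> = (\<Sum>a\<in>UNIV. \<Sum>b\<in>UNIV. S$a$b * G'$a$b) + (\<Sum>a\<in>UNIV. \<Sum>b\<in>UNIV. S$a$b * v$a * v$b) / c"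
          by (simp only: sum.distrib sum_divide_distrib)
        finally show ?thesis using IH vq c by simp
      qed
    qed
  qed
  show ?thesis using main G0 by blast
qed


lemma gram_entry: "((V::real^'r^'n) ** transpose V)$i$k = (\<Sum>j\<in>UNIV. V$i$j * V$k$j)"
  by (simp add: matrix_matrix_mult_def transpose_def)

lemma psd_gram: "psd ((V::real^'r^'n) ** transpose V)"
  unfolding psd_def
proof (intro conjI allI)
  show "transpose (V ** transpose V) = V ** transpose V"
    by (simp add: matrix_transpose_mul)
next
  fix x :: "real^'n"
  have "x \<bullet> ((V ** transpose V) *v x) = (x v* V) \<bullet> (transpose V *v x)"
    by (simp add: dot_lmul_matrix matrix_vector_mul_assoc[symmetric])
  also have "\<dots> = (x v* V) \<bullet> (x v* V)" by simp
  finally show "0 \<le> x \<bullet> ((V ** transpose V) *v x)" by simp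
qed

lemma opt_cond:
  fixes Sh S0 S :: "real^'n^'n"
  assumes G: "psd (Sh - S0)" and m: "(\<Sum>a\<in>UNIV. \<Sum>b\<in>UNIV. Sh$a$b * (Sh - S0)$a$b) \<le> 0"
    and S: "psd S"
  shows "(frob_norm (Sh - S0))^2 \<le> (frob_norm (S - S0))^2"
proof -
  define G where "G = Sh - S0"
  have Ge: "\<And>a b. G$a$b = Sh$a$b - S0$a$b" unfolding G_def by simp
  have p: "0 \<le> (\<Sum>a\<in>UNIV. \<Sum>b\<in>UNIV. S$a$b * G$a$b)"
    using psd_inner_nonneg[OF S] G unfolding G_def by blast
  have m': "(\<Sum>a\<in>UNIV. \<Sum>b\<in>UNIV. Sh$a$b * G$a$b) \<le> 0" using m unfolding G_def .
  have "(frob_norm (S - S0))^2 = (\<Sum>a\<in>UNIV. \<Sum>b\<in>UNIV. (S$a$b - Sh$a$b)^2 + 2*(S$a$b * G$a$b) - 2*(Sh$a$b * G$a$b) + (G$a$b)^2)"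
    unfolding frob_sq by (intro sum.cong refl) (simp add: Ge power2_eq_square algebra_simps)
  also have "\<dots> = (\<Sum>a\<in>UNIV. \<Sum>b\<in>UNIV. (S$a$b - Sh$a$b)^2) + 2*(\<Sum>a\<in>UNIV. \<Sum>b\<in>UNIV. S$a$b * G$a$b)
       - 2*(\<Sum>a\<in>UNIV. \<Sum>b\<in>UNIV. Sh$a$b * G$a$b) + (\<Sum>a\<in>UNIV. \<Sum>b\<in>UNIV. (G$a$b)^2)"
    by (simp only: sum.distrib sum_subtractf sum_distrib_left)
  also have "\<dots> \<ge> (\<Sum>a\<in>UNIV. \<Sum>b\<in>UNIV. (G$a$b)^2)"
  proof -
    have "0 \<le> (\<Sum>a\<in>UNIV. \<Sum>b\<in>UNIV. (S$a$b - Sh$a$b)^2)" by (intro sum_nonneg) simp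
    thus ?thesis using p m' by linarith
  qed
  finally show ?thesis unfolding frob_sq G_def by simp
qed

lemma small_le:
  fixes c K d :: real
  assumes d: "0 < d" and h: "\<forall>t. 0 < t \<and> t < d \<longrightarrow> c \<le> t * K"
  shows "c \<le> 0"
proof (rule ccontr)
  assume "\<not> c \<le> 0"
  hence c: "c > 0" by simp
  define t where "t = min (d/2) (c / (2*(\<bar>K\<bar>+1)))"
  have t0: "0 < t" unfolding t_def using d c by simp
  have td: "t < d" unfolding t_def using d by simp
  have t2: "t * (\<bar>K\<bar>+1) \<le> c/2"
  proof -
    have "t \<le> c / (2*(\<bar>K\<bar>+1))" unfolding t_def by simp
    hence "t * (\<bar>K\<bar>+1) \<le> c / (2*(\<bar>K\<bar>+1)) * (\<bar>K\<bar>+1)"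
      by (rule mult_right_mono) simp
    also have "\<dots> = c/2" by (simp add: field_simps)
    finally show ?thesis .
  qed
  have "t * K \<le> t * \<bar>K\<bar>" using t0 by (simp add: mult_left_mono)
  moreover have "c \<le> t * K" using h t0 td by blast
  moreover have "t * \<bar>K\<bar> \<le> t * (\<bar>K\<bar>+1)" using t0 by (simp add: algebra_simps)
  ultimately show False using t2 c by linarith
qed

lemma kernel_vec:
  fixes Vh :: "real^'r^'n"
  assumes "rank (Vh ** transpose Vh) < CARD('r)"
  shows "\<exists>w. w \<noteq> 0 \<and> Vh *v w = 0"
proof -
  let ?T = "transpose Vh"
  have sp: "span (range ((*v) ?T)) = range ((*v) ?T)"
    using linear_subspace_image[OF matrix_vector_mul_linear[of ?T] subspace_UNIV] span_eq_iff by blast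
  have inj: "inj_on ((*v) Vh) (span (range ((*v) ?T)))"
    unfolding sp
  proof (rule inj_onI)
    fix u1 u2 assume u1: "u1 \<in> range ((*v) ?T)" and u2: "u2 \<in> range ((*v) ?T)"
      and eq: "Vh *v u1 = Vh *v u2"
    obtain y1 where y1: "u1 = ?T *v y1" using u1 by auto
    obtain y2 where y2: "u2 = ?T *v y2" using u2 by auto
    define d where "d = y1 - y2"
    define z where "z = ?T *v d"
    have z: "z = u1 - u2" unfolding z_def d_def y1 y2 by (simp add: matrix_vector_mult_diff_distrib)
    have Vz: "Vh *v z = 0" using eq unfolding z by (simp add: matrix_vector_mult_diff_distrib)
    have "z \<bullet> z = (d v* Vh) \<bullet> z" unfolding z_def by simp
    also have "\<dots> = d \<bullet> (Vh *v z)" by (rule dot_lmul_matrix)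
    also have "\<dots> = 0" using Vz by simp
    finally have "z = 0" by simp
    thus "u1 = u2" using z by simp
  qed
  have "rank (Vh ** ?T) = dim (range (\<lambda>x. (Vh ** ?T) *v x))" by (rule rank_dim_range)
  also have "range (\<lambda>x. (Vh ** ?T) *v x) = (*v) Vh ` range ((*v) ?T)"
    by (simp add: image_image matrix_vector_mul_assoc del: transpose_matrix_vector)
  also have "dim \<dots> = dim (range ((*v) ?T))"
    by (rule dim_image_eq[OF matrix_vector_mul_linear inj])
  also have "\<dots> = rank ?T" by (simp add: rank_dim_range)
  also have "\<dots> = rank Vh" by (rule rank_transpose)
  finally have "rank Vh < CARD('r)" using assms by simp
  hence "rank Vh \<noteq> CARD('r)" by simp
  thus ?thesis using matrix_nonfull_linear_equations_eq[of Vh] by blast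
qed


lemma so_real:
  fixes t K q A :: real
  assumes "0 < t" "t < 1" "0 \<le> K" "A \<le> A + 2*t^2*q + t^4*K"
  shows "-q \<le> t*K"
proof -
  have "0 \<le> t^2 * (2*q + t^2*K)" using assms(4) by (simp add: algebra_simps power4_eq_xxxx power2_eq_square)
  moreover have "0 < t^2" using assms(1) by simp
  ultimately have h: "0 \<le> 2*q + t^2*K" by (simp add: zero_le_mult_iff)
  have "t^2 \<le> t" using assms(1,2) by (simp add: power2_eq_square)
  hence "t^2 * K \<le> t * K" using assms(3) by (rule mult_right_mono)
  moreover have "t^2*K \<ge> 0" using assms(3) by simp
  ultimately show ?thesis using h by linarith
qed

lemma fo_real:
  fixes t N m A :: real
  assumes "0 < t" "t < 1" "0 \<le> N" "A \<le> A - 2*(2*t - t^2)*m + (2*t-t^2)^2*N"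
  shows "m \<le> t*N"
proof -
  define u where "u = 2*t - t^2"
  have u0: "0 < u" unfolding u_def using assms(1,2) by (simp add: power2_eq_square algebra_simps mult_strict_right_mono)
  have ut: "u \<le> 2*t" unfolding u_def by simp
  have "0 \<le> u * (u*N - 2*m)" using assms(4) unfolding u_def by (simp add: algebra_simps power2_eq_square)
  hence "0 \<le> u*N - 2*m" using u0 by (simp add: zero_le_mult_iff)
  moreover have "u*N \<le> 2*t*N" using ut assms(3) by (rule mult_right_mono)
  ultimately show ?thesis by linarith
qed

lemma nb_real:
  fixes t e n :: real
  assumes "0 < t" "t < e/(n+1)" "0 \<le> n"
  shows "t*n < e"
proof -
  have "t*(n+1) < e" using assms by (simp add: less_divide_eq)
  moreover have "t*n \<le> t*(n+1)" using assms by (simp add: algebra_simps)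
  ultimately show ?thesis by linarith
qed

lemma fobj_sq: "fobj S0 V = (\<Sum>a\<in>UNIV. \<Sum>b\<in>UNIV. ((V ** transpose V - S0)$a$b)^2)"
  unfolding fobj_def frob_sq ..

lemma second_order:
  fixes S0 :: "real^'n^'n" and Vh :: "real^'r^'n"
  assumes S0: "transpose S0 = S0"
    and loc: "\<exists>e>0. \<forall>V :: real^'r^'n. frob_norm (V - Vh) < e \<longrightarrow> fobj S0 Vh \<le> fobj S0 V"
    and w: "w \<noteq> 0" "Vh *v w = 0"
  shows "psd (Vh ** transpose Vh - S0)"
proof -
  obtain e where e: "e > 0" and H: "\<And>V :: real^'r^'n. frob_norm (V - Vh) < e \<Longrightarrow> fobj S0 Vh \<le> fobj S0 V"
    using loc by blast
  define Sh where "Sh = Vh ** transpose Vh"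
  define G where "G = Sh - S0"
  have Ge: "\<And>a b. G$a$b = Sh$a$b - S0$a$b" unfolding G_def by simp
  have trd: "\<And>A B :: real^'n^'n. transpose (A - B) = transpose A - transpose B"
    by (simp add: vec_eq_iff transpose_def)
  have symG: "transpose G = G"
    unfolding G_def trd S0 using psd_gram[of Vh] unfolding psd_def Sh_def by simp
  define ww where "ww = (\<Sum>j\<in>UNIV. w$j * w$j)"
  have "w \<bullet> w = ww" unfolding ww_def by (simp add: inner_vec_def)
  hence ww: "0 < ww" using w(1) by (metis inner_gt_zero_iff)
  have kern: "\<And>i. (\<Sum>j\<in>UNIV. Vh$i$j * w$j) = 0"
  proof -
    fix i have "(Vh *v w)$i = 0" using w(2) by simp
    thus "(\<Sum>j\<in>UNIV. Vh$i$j * w$j) = 0" by (simp add: matrix_vector_mult_def)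
  qed
  have fVh: "fobj S0 Vh = (\<Sum>a\<in>UNIV. \<Sum>b\<in>UNIV. (G$a$b)^2)"
    unfolding fobj_sq G_def Sh_def ..
  show ?thesis
    unfolding psd_def
  proof (intro conjI allI)
    show "transpose (Vh ** transpose Vh - S0) = Vh ** transpose Vh - S0"
      using symG unfolding G_def Sh_def .
  next
    fix x :: "real^'n"
    define P :: "real^'r^'n" where "P = (\<chi> i j. x$i * w$j)"
    define q where "q = (\<Sum>a\<in>UNIV. \<Sum>b\<in>UNIV. G$a$b * (ww*(x$a*x$b)))"
    define K where "K = (\<Sum>a\<in>UNIV. \<Sum>b\<in>UNIV. (ww*(x$a*x$b))^2)"
    have K0: "0 \<le> K" unfolding K_def by (intro sum_nonneg) simp
    define d where "d = min 1 (e / (norm P + 1))"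
    have d0: "0 < d" unfolding d_def using e by (simp add: add_nonneg_pos)
    have "\<forall>t. 0 < t \<and> t < d \<longrightarrow> -q \<le> t*K"
    proof (intro allI impI)
      fix t :: real assume t: "0 < t \<and> t < d"
      define V where "V = Vh + t *\<^sub>R P"
      have "frob_norm (V - Vh) = t * norm P"
        unfolding V_def frob_norm_eq using t by simp
      also have "\<dots> < e" using nb_real[of t e "norm P"] t unfolding d_def by simp
      finally have le: "fobj S0 Vh \<le> fobj S0 V" by (rule H)
      have ent: "\<And>a b. (V ** transpose V - S0)$a$b = G$a$b + t^2 * (ww*(x$a*x$b))"
      proof -
        fix a b
        have "(V ** transpose V)$a$b = (\<Sum>j\<in>UNIV. (Vh$a$j + t*(x$a*w$j)) * (Vh$b$j + t*(x$b*w$j)))"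
          unfolding gram_entry V_def P_def by simp
        also have "\<dots> = (\<Sum>j\<in>UNIV. Vh$a$j * Vh$b$j + (t*x$b) * (Vh$a$j * w$j) + (t*x$a) * (Vh$b$j * w$j) + (t^2*(x$a*x$b)) * (w$j*w$j))"
          by (intro sum.cong refl) (simp add: algebra_simps power2_eq_square)
        also have "\<dots> = (\<Sum>j\<in>UNIV. Vh$a$j * Vh$b$j) + (t*x$b) * (\<Sum>j\<in>UNIV. Vh$a$j * w$j) + (t*x$a) * (\<Sum>j\<in>UNIV. Vh$b$j * w$j) + (t^2*(x$a*x$b)) * ww"
          unfolding ww_def by (simp only: sum.distrib sum_distrib_left)
        also have "\<dots> = Sh$a$b + t^2 * (ww*(x$a*x$b))"
          unfolding kern Sh_def gram_entry by simp
        finally show "(V ** transpose V - S0)$a$b = G$a$b + t^2 * (ww*(x$a*x$b))"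
          by (simp add: Ge)
      qed
      have "fobj S0 V = (\<Sum>a\<in>UNIV. \<Sum>b\<in>UNIV. (G$a$b)^2 + 2*t^2*(G$a$b * (ww*(x$a*x$b))) + t^4*(ww*(x$a*x$b))^2)"
        unfolding fobj_sq ent by (intro sum.cong refl) (simp add: power2_eq_square power4_eq_xxxx algebra_simps)
      also have "\<dots> = fobj S0 Vh + 2*t^2*q + t^4*K"
        unfolding fVh q_def K_def by (simp only: sum.distrib sum_distrib_left)
      finally have "fobj S0 Vh \<le> fobj S0 Vh + 2*t^2*q + t^4*K" using le by simp
      moreover have "t < 1" using t unfolding d_def by simp
      ultimately show "-q \<le> t*K" using so_real[of t K "fobj S0 Vh" q] t K0 by blast
    qed
    hence "-q \<le> 0" by (rule small_le[OF d0])
    moreover have "q = ww * (x \<bullet> (G *v x))"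
      unfolding q_def bil_form by (simp add: sum_distrib_left algebra_simps)
    ultimately have "0 \<le> ww * (x \<bullet> (G *v x))" by simp
    hence "0 \<le> x \<bullet> (G *v x)" using ww by (simp add: zero_le_mult_iff)
    thus "0 \<le> x \<bullet> ((Vh ** transpose Vh - S0) *v x)" unfolding G_def Sh_def .
  qed
qed

lemma first_order:
  fixes S0 :: "real^'n^'n" and Vh :: "real^'r^'n"
  assumes loc: "\<exists>e>0. \<forall>V :: real^'r^'n. frob_norm (V - Vh) < e \<longrightarrow> fobj S0 Vh \<le> fobj S0 V"
  shows "(\<Sum>a\<in>UNIV. \<Sum>b\<in>UNIV. (Vh ** transpose Vh)$a$b * (Vh ** transpose Vh - S0)$a$b) \<le> 0"
proof -
  obtain e where e: "e > 0" and H: "\<And>V :: real^'r^'n. frob_norm (V - Vh) < e \<Longrightarrow> fobj S0 Vh \<le> fobj S0 V"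
    using loc by blast
  define Sh where "Sh = Vh ** transpose Vh"
  define G where "G = Sh - S0"
  have Ge: "\<And>a b. G$a$b = Sh$a$b - S0$a$b" unfolding G_def by simp
  define m where "m = (\<Sum>a\<in>UNIV. \<Sum>b\<in>UNIV. Sh$a$b * G$a$b)"
  define N where "N = (\<Sum>a\<in>UNIV. \<Sum>b\<in>UNIV. (Sh$a$b)^2)"
  have N0: "0 \<le> N" unfolding N_def by (intro sum_nonneg) simp
  have fVh: "fobj S0 Vh = (\<Sum>a\<in>UNIV. \<Sum>b\<in>UNIV. (G$a$b)^2)"
    unfolding fobj_sq G_def Sh_def ..
  define d where "d = min 1 (e / (norm Vh + 1))"
  have d0: "0 < d" unfolding d_def using e by (simp add: add_nonneg_pos)
  have "\<forall>t. 0 < t \<and> t < d \<longrightarrow> m \<le> t*N"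
  proof (intro allI impI)
    fix t :: real assume t: "0 < t \<and> t < d"
    define V where "V = (1 - t) *\<^sub>R Vh"
    have "V - Vh = (-t) *\<^sub>R Vh" unfolding V_def by (simp add: algebra_simps)
    hence "frob_norm (V - Vh) = t * norm Vh"
      unfolding frob_norm_eq using t by simp
    also have "\<dots> < e" using nb_real[of t e "norm Vh"] t unfolding d_def by simp
    finally have le: "fobj S0 Vh \<le> fobj S0 V" by (rule H)
    let ?u = "2*t - t^2"
    have ent: "\<And>a b. (V ** transpose V - S0)$a$b = G$a$b - ?u * Sh$a$b"
    proof -
      fix a b
      have "(V ** transpose V)$a$b = (\<Sum>j\<in>UNIV. ((1-t)*Vh$a$j) * ((1-t)*Vh$b$j))"
        unfolding gram_entry V_def by simp
      also have "\<dots> = (\<Sum>j\<in>UNIV. (1-t)^2 * (Vh$a$j * Vh$b$j))"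
        by (intro sum.cong refl) (simp add: algebra_simps power2_eq_square)
      also have "\<dots> = (1-t)^2 * Sh$a$b"
        unfolding Sh_def gram_entry by (simp only: sum_distrib_left)
      finally show "(V ** transpose V - S0)$a$b = G$a$b - ?u * Sh$a$b"
        by (simp add: Ge power2_eq_square algebra_simps)
    qed
    have "fobj S0 V = (\<Sum>a\<in>UNIV. \<Sum>b\<in>UNIV. (G$a$b)^2 - 2*?u*(Sh$a$b * G$a$b) + ?u^2*(Sh$a$b)^2)"
      unfolding fobj_sq ent by (intro sum.cong refl) (simp add: power2_eq_square algebra_simps)
    also have "\<dots> = fobj S0 Vh - 2*?u*m + ?u^2*N"
      unfolding fVh m_def N_def by (simp only: sum.distrib sum_subtractf sum_distrib_left)
    finally have "fobj S0 Vh \<le> fobj S0 Vh - 2*?u*m + ?u^2*N" using le by simp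
    moreover have "t < 1" using t unfolding d_def by simp
    ultimately show "m \<le> t*N" using fo_real[of t N "fobj S0 Vh" m] t N0 by blast
  qed
  hence "m \<le> 0" by (rule small_le[OF d0])
  thus ?thesis unfolding m_def G_def Sh_def .
qed


theorem theorem1:
  fixes S0 :: "real^'n^'n" and Vh :: "real^'r^'n"
  assumes "CARD('n) \<ge> 2" and "CARD('r) < CARD('n)"
    and "transpose S0 = S0"
    and "\<exists>e>0. \<forall>V :: real^'r^'n. frob_norm (V - Vh) < e \<longrightarrow> fobj S0 Vh \<le> fobj S0 V"
    and "rank (Vh ** transpose Vh) < CARD('r)"
  shows "(\<forall>V :: real^'r^'n. fobj S0 Vh \<le> fobj S0 V)
     \<and> psd (Vh ** transpose Vh)
     \<and> (\<forall>S. psd S \<longrightarrow> (frob_norm (Vh ** transpose Vh - S0))^2 \<le> (frob_norm (S - S0))^2)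
     \<and> rank (Vh ** transpose Vh) \<le> CARD('r)
     \<and> (\<forall>S. psd S \<and> rank S \<le> CARD('r) \<longrightarrow>
            (frob_norm (Vh ** transpose Vh - S0))^2 \<le> (frob_norm (S - S0))^2)"
proof -
  obtain w :: "real^'r" where w: "w \<noteq> 0" "Vh *v w = 0" using kernel_vec[OF assms(5)] by blast
  have G: "psd (Vh ** transpose Vh - S0)" by (rule second_order[OF assms(3) assms(4) w])
  have m: "(\<Sum>a\<in>UNIV. \<Sum>b\<in>UNIV. (Vh ** transpose Vh)$a$b * (Vh ** transpose Vh - S0)$a$b) \<le> 0"
    by (rule first_order[OF assms(4)])
  have opt: "\<forall>S. psd S \<longrightarrow> (frob_norm (Vh ** transpose Vh - S0))^2 \<le> (frob_norm (S - S0))^2"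
    using opt_cond[OF G m] by blast
  have all: "\<forall>V :: real^'r^'n. fobj S0 Vh \<le> fobj S0 V"
    using opt psd_gram unfolding fobj_def by blast
  show ?thesis using all opt psd_gram[of Vh] assms(5) by auto
qed

end
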